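(* Let $k$ and $n$ be positive integers and let $\ell$ be a positive divisor of $n$. Then in $\mathbb{Q}((T))$, $$\mathbf{B}^k(\ell T)\,\mathbf{B}(nT)=\ell^{k}T^{k}\,\mathbf{B}(nT)\,f^{(k)}_{\ell,n}(e^T)+\frac{n}{\ell}\,\mathbf{B}^{k+1}(\ell T)\,h^{(k)}_{\ell,n}(e^T).$$
   Context: $\mathbf{B}(T)=T/(e^T-1)\in\mathbb{Q}[[T]]$, $\mathbf{B}(cT)=cT/(e^{cT}-1)$ for $0\ne c\in\mathbb{Q}$, and $\mathbf{B}^j(cT)=(\mathbf{B}(cT))^j$. For positive integers $k,n$, the polynomials $h^{(k)}_{1,n},f^{(k)}_{1,n}\in\mathbb{Q}[X]$ are the (unique) polynomials with $\deg h^{(k)}_{1,n}<k$ and $\deg f^{(k)}_{1,n}<n-1$ such that $$\frac{1}{(X-1)^k(1+X+\cdots+X^{n-1})}=\frac{h^{(k)}_{1,n}}{(X-1)^k}+\frac{f^{(k)}_{1,n}}{1+X+\cdots+X^{n-1}}.$$ For a positive divisor $\ell$ of $n$, set $h^{(k)}_{\ell,n}=h^{(k)}_{1,n/\ell}(X^\ell)$ and $f^{(k)}_{\ell,n}=f^{(k)}_{1,n/\ell}(X^\ell)$. *)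

theory Defs
  imports "HOL-Computational_Algebra.Computational_Algebra"
begin

text \<open>B(cT) = cT/(e^{cT}-1) in Q[[T]] (exact division of formal power series).\<close>
definition Bser :: "rat \<Rightarrow> rat fps" where
  "Bser c = fps_const c * fps_X / (fps_exp c - 1)"

definition Phi :: "nat \<Rightarrow> rat poly" where
  "Phi n = (\<Sum>i<n. monom 1 i)"

definition hf1 :: "nat \<Rightarrow> nat \<Rightarrow> rat poly \<times> rat poly" where
  "hf1 k n = (THE p. (fst p = 0 \<or> degree (fst p) < k) \<and>
                     (snd p = 0 \<or> degree (snd p) < n - 1) \<and>
                     Fract 1 ([:-1, 1:] ^ k * Phi n)
                       = Fract (fst p) ([:-1, 1:] ^ k) + Fract (snd p) (Phi n))"

definition h_poly :: "nat \<Rightarrow> nat \<Rightarrow> nat \<Rightarrow> rat poly" where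
  "h_poly k l n = pcompose (fst (hf1 k (n div l))) (monom 1 l)"

definition f_poly :: "nat \<Rightarrow> nat \<Rightarrow> nat \<Rightarrow> rat poly" where
  "f_poly k l n = pcompose (snd (hf1 k (n div l))) (monom 1 l)"

definition eval_exp :: "rat poly \<Rightarrow> rat fps" where
  "eval_exp p = poly (map_poly fps_const p) (fps_exp 1)"

end

theory Submission imports Defs "HOL-Computational_Algebra.Field_as_Ring" begin
definition ev :: "rat fps \<Rightarrow> rat poly \<Rightarrow> rat fps" where
  "ev y p = poly (map_poly fps_const p) y"

lemma ev_pCons: "ev y (pCons a p) = fps_const a + y * ev y p"
  by (simp add: ev_def map_poly_pCons)
lemma ev_0[simp]: "ev y 0 = 0" by (simp add: ev_def)
lemma ev_add: "ev y (p + q) = ev y p + ev y q"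
proof (induction p arbitrary: q)
  case 0 then show ?case by simp
next
  case (pCons a p)
  show ?case
  proof (cases q rule: pCons_cases)
    case (pCons b q')
    then show ?thesis using pCons.IH[of q'] by (simp add: ev_pCons algebra_simps fps_const_add add.commute)
  qed
qed
lemma ev_smult: "ev y (smult a q) = fps_const a * ev y q"
  by (induction q) (simp_all add: ev_pCons algebra_simps)
lemma ev_mult: "ev y (p * q) = ev y p * ev y q"
  by (induction p) (simp_all add: ev_pCons ev_add ev_smult algebra_simps)
lemma ev_1[simp]: "ev y 1 = 1" by (simp add: ev_def)
lemma ev_uminus: "ev y (- p) = - ev y p"
  using ev_add[of y p "-p"] by (simp add: add_eq_0_iff2)
lemma ev_diff: "ev y (p - q) = ev y p - ev y q"
  using ev_add[of y p "-q"] ev_uminus by simp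
lemma ev_power: "ev y (p ^ j) = ev y p ^ j"
  by (induction j) (simp_all add: ev_mult)
lemma ev_sum: "ev y (sum f A) = (\<Sum>x\<in>A. ev y (f x))"
  by (induction A rule: infinite_finite_induct) (simp_all add: ev_add)
lemma ev_monom: "ev y (monom 1 i) = y ^ i"
  by (simp add: ev_def map_poly_monom poly_monom)
lemma ev_X1: "ev y [:-1, 1:] = y - 1"
  by (simp add: ev_pCons)
lemma ev_pcompose: "ev y (pcompose p q) = ev (ev y q) p"
  by (induction p) (simp_all add: pcompose_pCons ev_pCons ev_add ev_mult)
lemma eval_exp_ev: "eval_exp p = ev (fps_exp 1) p" by (simp add: eval_exp_def ev_def)

lemma Phi_mult: "Phi m * [:-1, 1:] = monom 1 m - 1"
proof -
  have "Phi m = (\<Sum>i<m. [:0,1::rat:]^i)" by (simp add: Phi_def monom_altdef)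
  moreover have "[:0,1::rat:] - 1 = [:-1, 1:]" by (simp add: one_pCons)
  ultimately show ?thesis using power_diff_1_eq[of "[:0,1::rat:]" m]
    by (simp add: monom_altdef mult.commute)
qed

lemma poly_Phi1: "poly (Phi m) 1 = of_nat m"
  by (simp add: Phi_def poly_sum poly_monom)

lemma Phi_nz: "m > 0 \<Longrightarrow> Phi m \<noteq> 0"
  using poly_Phi1[of m] by auto

lemma degree_Phi: "m > 0 \<Longrightarrow> degree (Phi m) = m - 1"
proof -
  assume m: "m > 0"
  have "degree (Phi m * [:-1, 1:]) = degree (Phi m) + 1"
    using Phi_nz[OF m] by (subst degree_mult_eq) auto
  moreover have "degree (monom (1::rat) m - 1) = m"
    using m degree_add_eq_left[of "-1" "monom (1::rat) m"] by (simp add: degree_monom_eq)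
  ultimately show ?thesis using Phi_mult[of m] by simp
qed

lemma coprime_AP: "m > 0 \<Longrightarrow> coprime ([:-1, 1:] ^ k) (Phi m)"
proof -
  assume m: "m > 0"
  have "prime_elem [:-1, 1::rat:]" by (rule prime_elem_linear_field_poly) simp
  moreover have "\<not> [:-1, 1:] dvd Phi m"
    using poly_Phi1[of m] m by (simp add: dvd_iff_poly_eq_0)
  ultimately have "coprime [:-1, 1:] (Phi m)" by (rule prime_elem_imp_coprime)
  then show ?thesis by simp
qed

definition Pr :: "nat \<Rightarrow> nat \<Rightarrow> rat poly \<times> rat poly \<Rightarrow> bool" where
  "Pr k m p = ((fst p = 0 \<or> degree (fst p) < k) \<and>
                     (snd p = 0 \<or> degree (snd p) < m - 1) \<and>
                     Fract 1 ([:-1, 1:] ^ k * Phi m)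
                       = Fract (fst p) ([:-1, 1:] ^ k) + Fract (snd p) (Phi m))"

lemma Fract_iff:
  assumes "m > 0"
  shows "(Fract 1 ([:-1, 1:] ^ k * Phi m) = Fract h ([:-1, 1:] ^ k) + Fract f (Phi m))
     \<longleftrightarrow> h * Phi m + f * [:-1, 1:] ^ k = 1"
proof -
  have A: "[:-1, 1::rat:] ^ k \<noteq> 0" by simp
  have P: "Phi m \<noteq> 0" using Phi_nz[OF assms] .
  have AP: "[:-1, 1::rat:] ^ k * Phi m \<noteq> 0" using A P by simp
  show ?thesis using A P AP
    by (simp add: eq_fract mult.commute[of "Phi m"])
qed

lemma Pr_exists:
  assumes k: "k > 0" and m: "m > 0"
  shows "\<exists>p. Pr k m p"
proof -
  define A :: "rat poly" where "A = [:-1, 1:] ^ k"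
  define P where "P = Phi m"
  have P0: "P \<noteq> 0" using Phi_nz[OF m] by (simp add: P_def)
  have degA: "degree A = k" by (simp add: A_def degree_power_eq)
  have "gcd A P = 1" using coprime_AP[OF m, of k] by (simp add: A_def P_def)
  then obtain u v where uv: "u * A + v * P = 1"
    using bezout_coefficients_fst_snd[of A P] by metis
  define f where "f = u mod P"
  define q where "q = u div P"
  define h where "h = v + q * A"
  have uq: "u = q * P + f" by (simp add: f_def q_def)
  have eq: "h * P + f * A = 1" using uv unfolding h_def by (simp add: uq algebra_simps)
  have fdeg: "f = 0 \<or> degree f < m - 1"
    using degree_mod_less[OF P0, of u] degree_Phi[OF m] by (simp add: f_def P_def)
  have hdeg: "h = 0 \<or> degree h < k"
  proof (cases "h = 0")
    case False
    have hp: "h * P = 1 - f * A" using eq by (simp add: algebra_simps)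
    have dhp: "degree (h * P) = degree h + (m - 1)"
      using False P0 degree_Phi[OF m] by (simp add: degree_mult_eq P_def)
    show ?thesis
    proof (cases "f = 0")
      case True
      then show ?thesis using hp dhp k by simp
    next
      case fnz: False
      have "degree (f * A) = degree f + k" using fnz degA by (simp add: degree_mult_eq A_def)
      moreover have "degree (1 - f * A) \<le> max (degree (1::rat poly)) (degree (f * A))"
        by (rule degree_diff_le_max)
      ultimately have "degree h + (m - 1) \<le> degree f + k" using hp dhp by simp
      with fdeg fnz m show ?thesis by arith
    qed
  qed simp
  have "Pr k m (h, f)" unfolding Pr_def using hdeg fdeg eq Fract_iff[OF m, of k h f]
    by (simp add: A_def P_def)
  then show ?thesis by blast
qed

lemma Pr_unique:
  assumes k: "k > 0" and m: "m > 0" and p1: "Pr k m p1" and p2: "Pr k m p2"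
  shows "p1 = p2"
proof -
  obtain h1 f1 where e1: "p1 = (h1, f1)" by (cases p1)
  obtain h2 f2 where e2: "p2 = (h2, f2)" by (cases p2)
  define A :: "rat poly" where "A = [:-1, 1:] ^ k"
  define P where "P = Phi m"
  have P0: "P \<noteq> 0" using Phi_nz[OF m] by (simp add: P_def)
  have A0: "A \<noteq> 0" by (simp add: A_def)
  have degA: "degree A = k" by (simp add: A_def degree_power_eq)
  have q1: "h1 * P + f1 * A = 1" "h1 = 0 \<or> degree h1 < k" "f1 = 0 \<or> degree f1 < m - 1"
    using p1 Fract_iff[OF m] by (auto simp: Pr_def e1 A_def P_def)
  have q2: "h2 * P + f2 * A = 1" "h2 = 0 \<or> degree h2 < k" "f2 = 0 \<or> degree f2 < m - 1"
    using p2 Fract_iff[OF m] by (auto simp: Pr_def e2 A_def P_def)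
  have d: "(h1 - h2) * P = (f2 - f1) * A" using q1(1) q2(1) by (simp add: algebra_simps)
  have "A dvd (h1 - h2) * P" using d by simp
  moreover have "coprime A P" using coprime_AP[OF m] by (simp add: A_def P_def)
  ultimately have "A dvd h1 - h2" by (simp add: coprime_dvd_mult_left_iff)
  moreover have "degree (h1 - h2) < k"
  proof -
    have "degree h1 < k" "degree h2 < k" using q1(2) q2(2) k by auto
    then show ?thesis using degree_diff_le_max[of h1 h2] by simp
  qed
  ultimately have "h1 - h2 = 0"
    using dvd_imp_degree_le[of A "h1 - h2"] degA by (cases "h1 - h2 = 0") auto
  then have "h1 = h2" by simp
  moreover then have "f1 = f2" using d A0 by simp
  ultimately show ?thesis by (simp add: e1 e2)
qed

lemma hf1_prop:
  assumes k: "k > 0" and m: "m > 0"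
  shows "fst (hf1 k m) * Phi m + snd (hf1 k m) * [:-1, 1:] ^ k = 1"
proof -
  have "Pr k m (hf1 k m)"
    unfolding hf1_def Pr_def[symmetric]
    using Pr_exists[OF k m] Pr_unique[OF k m] by (metis theI)
  then show ?thesis using Fract_iff[OF m] by (simp add: Pr_def)
qed

definition G :: "rat \<Rightarrow> rat fps" where "G c = fps_shift 1 (fps_exp c - 1)"

lemma XG: "fps_X * G c = fps_exp c - 1"
  by (intro fps_ext) (simp add: G_def)

lemma G0: "G c $ 0 = c" by (simp add: G_def)

lemma Bser_G: assumes "c \<noteq> 0" shows "Bser c * G c = fps_const c"
proof -
  have inv: "inverse (G c) * G c = 1" using assms by (intro inverse_mult_eq_1) (simp add: G0)
  have Gnz: "G c \<noteq> 0" using assms G0[of c] by auto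
  have XGnz: "fps_X * G c \<noteq> 0" using Gnz by simp
  have eq: "fps_const c * fps_X = (fps_const c * inverse (G c)) * (fps_X * G c)"
    using inv by (simp add: algebra_simps)
  have "Bser c = (fps_const c * inverse (G c)) * (fps_X * G c) / (fps_X * G c)"
    by (simp only: Bser_def XG[symmetric] eq)
  also have "\<dots> = fps_const c * inverse (G c)"
    by (rule nonzero_mult_div_cancel_right[OF XGnz])
  finally have "Bser c = fps_const c * inverse (G c)" .
  then show ?thesis using inv by (simp add: algebra_simps)
qed

theorem mainTheorem5:
  fixes k n l :: nat
  assumes "k > 0" and "n > 0" and "l > 0" and "l dvd n"
  shows "Bser (of_nat l) ^ k * Bser (of_nat n)
       = fps_const (of_nat l ^ k) * fps_X ^ k * Bser (of_nat n) * eval_exp (f_poly k l n)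
         + fps_const (of_nat n / of_nat l) * Bser (of_nat l) ^ (k + 1) * eval_exp (h_poly k l n)"
proof -
  define m where "m = n div l"
  have nlm: "n = l * m" using assms(3,4) by (auto simp: m_def elim!: dvdE)
  have m0: "m > 0" using assms(2) nlm by (cases m) auto
  define L :: rat where "L = of_nat l"
  define N :: rat where "N = of_nat n"
  have L0: "L \<noteq> 0" using assms by (simp add: L_def)
  have N0: "N \<noteq> 0" using assms by (simp add: N_def)
  have NLm: "N = of_nat m * L" by (simp add: N_def L_def nlm)
  define E where "E = fps_exp L"
  have E1: "fps_exp 1 ^ l = E" by (simp add: E_def L_def fps_exp_power_mult)
  define h where "h = fst (hf1 k m)"
  define f where "f = snd (hf1 k m)"
  have id: "h * Phi m + f * [:-1, 1:] ^ k = 1"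
    using hf1_prop[OF assms(1) m0] by (simp add: h_def f_def)
  define H where "H = ev E h"
  define F where "F = ev E f"
  define P where "P = ev E (Phi m)"
  have evh: "eval_exp (h_poly k l n) = H"
    by (simp add: h_poly_def eval_exp_ev ev_pcompose ev_monom E1 H_def h_def m_def)
  have evf: "eval_exp (f_poly k l n) = F"
    by (simp add: f_poly_def eval_exp_ev ev_pcompose ev_monom E1 F_def f_def m_def)
  have id2: "H * P + F * (fps_X * G L) ^ k = 1"
    using arg_cong[OF id, of "ev E"]
    by (simp add: ev_add ev_mult ev_power ev_X1 H_def F_def P_def XG E_def)
  have "P * (fps_X * G L) = ev E (Phi m * [:-1, 1:])"
    by (simp only: ev_mult ev_X1 P_def XG E_def)
  also have "\<dots> = fps_exp N - 1"
    unfolding Phi_mult by (simp add: ev_diff ev_monom E_def fps_exp_power_mult NLm)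
  also have "\<dots> = fps_X * G N" by (simp add: XG)
  finally have "fps_X * (P * G L) = fps_X * G N" by (simp add: algebra_simps)
  then have PG: "P * G L = G N" by simp
  define BL where "BL = Bser L"
  define BN where "BN = Bser N"
  have bl: "BL * G L = fps_const L" using Bser_G[OF L0] by (simp add: BL_def)
  have bn: "BN * G N = fps_const N" using Bser_G[OF N0] by (simp add: BN_def)
  have t1: "BN * P = fps_const (N / L) * BL"
  proof -
    have "BN * P * fps_const L = BN * (P * G L) * BL" using bl by (simp add: algebra_simps)
    also have "\<dots> = fps_const N * BL" using PG bn by simp
    finally have e: "BN * P * fps_const L = fps_const N * BL" .
    have "BN * P = BN * P * fps_const L * fps_const (1 / L)"
      using L0 by (simp add: mult.assoc)
    also have "\<dots> = fps_const (N / L) * BL" unfolding e by (simp add: algebra_simps)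
    finally show ?thesis .
  qed
  have t2: "BL ^ k * (fps_X * G L) ^ k = fps_const (L ^ k) * fps_X ^ k"
  proof -
    have "BL ^ k * (fps_X * G L) ^ k = fps_X ^ k * (BL * G L) ^ k"
      by (simp add: power_mult_distrib algebra_simps)
    also have "\<dots> = fps_const (L ^ k) * fps_X ^ k" by (simp add: bl fps_const_power)
    finally show ?thesis .
  qed
  have "BL ^ k * BN = BL ^ k * BN * (H * P + F * (fps_X * G L) ^ k)" using id2 by simp
  also have "\<dots> = (BN * P) * BL ^ k * H + (BL ^ k * (fps_X * G L) ^ k) * BN * F"
    by (simp add: algebra_simps)
  also have "\<dots> = fps_const (L ^ k) * fps_X ^ k * BN * F + fps_const (N / L) * BL ^ (k + 1) * H"
    unfolding t1 t2 by (simp add: algebra_simps)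
  finally show ?thesis
    by (simp add: evh evf BL_def BN_def L_def N_def)
qed
end
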